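(* Let $\lambda,\mu$ be integral partitions with $\lambda\neq\mu$, and suppose $\|\lambda\|_p=\|\mu\|_p$ for some real $p$ with $1<p<\infty$. Then $\lambda^{\times n}\not\hookrightarrow\mu^{\times n}$ for every positive integer $n$.
   Context: An integral partition is a finite nonincreasing sequence of positive integers (equality means equality as multisets of entries). For $p\in[1,\infty)$, $\|\lambda\|_p=(\sum_i\lambda_i^p)^{1/p}$. The product $\lambda\times\mu$ of $\lambda=[\lambda_1,\ldots,\lambda_m]$ and $\mu=[\mu_1,\ldots,\mu_n]$ is the partition whose entries are all products $\lambda_i\mu_j$ ($1\le i\le m$, $1\le j\le n$), reordered nonincreasingly; $\lambda^{\times n}$ is the $n$-fold product $\lambda\times\cdots\times\lambda$. $\lambda$ embeds into $\mu$, written $\lambda\hookrightarrow\mu$, if there is a map $\varphi:\{1,\ldots,m\}\to\{1,\ldots,n\}$ with $\sum_{i\in\varphi^{-1}(j)}\lambda_i\le\mu_j$ for all $j$. *)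

theory Defs
  imports Complex_Main
begin

text \<open>An integral partition: a finite nonincreasing list of positive naturals.
  Since entries are sorted, list equality coincides with multiset equality.\<close>
definition is_partition :: "nat list \<Rightarrow> bool" where
  "is_partition xs \<longleftrightarrow> sorted_wrt (\<ge>) xs \<and> (\<forall>x\<in>set xs. 0 < x)"

definition pnorm :: "real \<Rightarrow> nat list \<Rightarrow> real" where
  "pnorm p xs = (\<Sum>x\<leftarrow>xs. real x powr p) powr (1 / p)"

definition ptimes :: "nat list \<Rightarrow> nat list \<Rightarrow> nat list" where
  "ptimes xs ys = rev (sort [x * y. x \<leftarrow> xs, y \<leftarrow> ys])"

fun ppow :: "nat list \<Rightarrow> nat \<Rightarrow> nat list" where
  "ppow xs 0 = [1]"
| "ppow xs (Suc n) = ptimes (ppow xs n) xs"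

definition embeds :: "nat list \<Rightarrow> nat list \<Rightarrow> bool" where
  "embeds xs ys \<longleftrightarrow> (\<exists>\<phi> :: nat \<Rightarrow> nat.
      (\<forall>i < length xs. \<phi> i < length ys) \<and>
      (\<forall>j < length ys. (\<Sum>i | i < length xs \<and> \<phi> i = j. xs ! i) \<le> ys ! j))"

end

theory Submission
  imports Defs "HOL-Library.Multiset"
begin

lemma sum_list_map_mset: "sum_list (map f xs) = sum_mset (image_mset f (mset xs))"
  by (metis mset_map sum_mset_sum_list)

lemma ptimes_sum:
  fixes f :: "nat \<Rightarrow> real"
  assumes mult: "\<And>x y. f (x * y) = f x * f y"
  shows "sum_list (map f (ptimes xs ys)) = sum_list (map f xs) * sum_list (map f ys)"
proof -
  have "sum_list (map f (ptimes xs ys)) = sum_list (map f [x * y. x \<leftarrow> xs, y \<leftarrow> ys])"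
    unfolding ptimes_def sum_list_map_mset by simp
  also have "\<dots> = sum_list (map f xs) * sum_list (map f ys)"
    by (induction xs) (simp_all add: comp_def mult sum_list_const_mult algebra_simps)
  finally show ?thesis .
qed

lemma ppow_sum:
  fixes f :: "nat \<Rightarrow> real"
  assumes mult: "\<And>x y. f (x * y) = f x * f y" and one: "f 1 = 1"
  shows "sum_list (map f (ppow xs n)) = sum_list (map f xs) ^ n"
  using one by (induction n) (simp_all add: ptimes_sum[OF mult])

lemma ppow_pos:
  assumes "\<forall>x\<in>set xs. 0 < x"
  shows "\<forall>x\<in>set (ppow xs n). 0 < x"
  using assms by (induction n) (auto simp: ptimes_def)

lemma superadd:
  fixes f :: "nat \<Rightarrow> real"
  assumes "finite I" "\<forall>i\<in>I. 0 < f i" "1 < p"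
  shows "(\<Sum>i\<in>I. f i powr p) \<le> (\<Sum>i\<in>I. f i) powr p"
    and "(\<exists>i\<in>I. f i < (\<Sum>i\<in>I. f i)) \<Longrightarrow> (\<Sum>i\<in>I. f i powr p) < (\<Sum>i\<in>I. f i) powr p"
proof -
  define T where "T = (\<Sum>i\<in>I. f i)"
  have T0: "0 \<le> T" unfolding T_def using assms by (simp add: less_imp_le sum_nonneg)
  have le: "f i \<le> T" if "i \<in> I" for i
    unfolding T_def using assms that by (intro member_le_sum) (auto simp: less_imp_le)
  have eq: "f i powr p = f i * f i powr (p - 1)" if "i \<in> I" for i
    using assms that by (simp add: powr_mult_base less_imp_le)
  have step: "f i powr p \<le> f i * T powr (p - 1)" if "i \<in> I" for i
    using eq[OF that] le[OF that] assms that
    by (simp add: mult_left_mono powr_mono2 less_imp_le)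
  have Tp: "T * T powr (p - 1) = T powr p"
    using T0 by (simp add: powr_mult_base)
  have tot: "(\<Sum>i\<in>I. f i * T powr (p - 1)) = T powr p"
    by (simp add: sum_distrib_right[symmetric] T_def[symmetric] Tp)
  show "(\<Sum>i\<in>I. f i powr p) \<le> (\<Sum>i\<in>I. f i) powr p"
    using sum_mono[of I "\<lambda>i. f i powr p" "\<lambda>i. f i * T powr (p - 1)"] step tot
    by (simp add: T_def)
  assume "\<exists>i\<in>I. f i < (\<Sum>i\<in>I. f i)"
  then obtain i where i: "i \<in> I" "f i < T" unfolding T_def by blast
  have "f i powr p < f i * T powr (p - 1)"
    proof -
    have fi: "0 < f i" using assms i by auto
    have "f i powr (p - 1) < T powr (p - 1)" using powr_less_mono2[of "p-1" "f i" T] fi i assms by simp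
    then show ?thesis using eq[OF i(1)] fi by simp
  qed
  then have "(\<Sum>i\<in>I. f i powr p) < (\<Sum>i\<in>I. f i * T powr (p - 1))"
    using step assms(1) i(1) by (intro sum_strict_mono_ex1) auto
  then show "(\<Sum>i\<in>I. f i powr p) < (\<Sum>i\<in>I. f i) powr p" using tot by (simp add: T_def)
qed

lemma sum_list_idx: "sum_list (map f xs) = (\<Sum>i<length xs. f (xs ! i))"
  by (simp add: sum_list_sum_nth atLeast0LessThan)

lemma mset_idx: "mset xs = image_mset (\<lambda>i. xs ! i) (mset_set {..<length xs})"
proof -
  have "mset xs = mset (map (\<lambda>i. xs ! i) [0..<length xs])" by (simp add: map_nth)
  then show ?thesis by (simp add: atLeast0LessThan)
qed

lemma embed_eq:
  assumes emb: "embeds xs ys" and px: "\<forall>x\<in>set xs. 0 < x" and py: "\<forall>y\<in>set ys. 0 < y"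
    and p: "1 < p"
    and S: "sum_list (map (\<lambda>x. real x powr p) xs) = sum_list (map (\<lambda>x. real x powr p) ys)"
  shows "mset xs = mset ys"
proof -
  define m where "m = length xs"
  define l where "l = length ys"
  obtain \<phi> where ph1: "\<forall>i<m. \<phi> i < l"
    and ph2: "\<forall>j<l. (\<Sum>i | i < m \<and> \<phi> i = j. xs ! i) \<le> ys ! j"
    using emb unfolding embeds_def m_def l_def by blast
  define I where "I j = {i. i \<in> {..<m} \<and> \<phi> i = j}" for j
  define x where "x i = real (xs ! i)" for i
  define T where "T j = (\<Sum>i\<in>I j. x i)" for j
  have finI: "finite (I j)" for j unfolding I_def by auto
  have xpos: "\<forall>i\<in>I j. 0 < x i" for j
    using px unfolding I_def x_def m_def by auto
  have ypos: "0 < real (ys ! j)" if "j < l" for j using py that unfolding l_def by auto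
  have Tle: "T j \<le> real (ys ! j)" if "j < l" for j
  proof -
    have "(\<Sum>i\<in>I j. xs ! i) \<le> ys ! j" using ph2 that unfolding I_def by auto
    then have "real (\<Sum>i\<in>I j. xs ! i) \<le> real (ys ! j)" by linarith
    then show ?thesis unfolding T_def x_def by simp
  qed
  define a where "a j = (\<Sum>i\<in>I j. x i powr p)" for j
  define b where "b j = real (ys ! j) powr p" for j
  have T0: "0 \<le> T j" for j unfolding T_def using xpos[of j] by (simp add: sum_nonneg less_imp_le)
  have aT: "a j \<le> T j powr p" for j
    unfolding a_def T_def using superadd(1)[OF finI xpos p] .
  have Tb: "T j powr p \<le> b j" if "j < l" for j
    unfolding b_def using Tle[OF that] p
    by (intro powr_mono2) (auto simp: T0)
  have sa: "(\<Sum>j<l. a j) = sum_list (map (\<lambda>x. real x powr p) xs)"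
  proof -
    have "(\<Sum>j<l. a j) = (\<Sum>i<m. x i powr p)"
      unfolding a_def I_def using ph1 by (intro sum.group) auto
    then show ?thesis unfolding sum_list_idx x_def m_def by simp
  qed
  have sb: "(\<Sum>j<l. b j) = sum_list (map (\<lambda>x. real x powr p) ys)"
    unfolding sum_list_idx b_def l_def by simp
  have abeq: "a j = b j" if "j < l" for j
  proof (rule ccontr)
    assume "a j \<noteq> b j"
    then have "a j < b j" using aT[of j] Tb[OF that] by linarith
    then have "(\<Sum>j<l. a j) < (\<Sum>j<l. b j)"
      using aT Tb that by (intro sum_strict_mono_ex1) (auto intro: order_trans)
    then show False using sa sb S by simp
  qed
  have Teq: "T j = real (ys ! j)" if "j < l" for j
  proof (rule ccontr)
    assume "T j \<noteq> real (ys ! j)"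
    then have "T j < real (ys ! j)" using Tle[OF that] by simp
    then have "T j powr p < b j" unfolding b_def using p
      by (intro powr_less_mono2) (auto simp: T0)
    then show False using aT[of j] abeq[OF that] by simp
  qed
  have single: "\<exists>i. I j = {i}" if "j < l" for j
  proof -
    have "I j \<noteq> {}" using Teq[OF that] ypos[OF that] unfolding T_def by auto
    then obtain i where i: "i \<in> I j" by blast
    have "I j = {i}"
    proof (rule ccontr)
      assume "I j \<noteq> {i}"
      then obtain i' where i': "i' \<in> I j" "i' \<noteq> i" using i by blast
      have nn: "0 \<le> sum x (I j - {i, i'})" using xpos[of j] by (intro sum_nonneg) (auto simp: less_imp_le)
      have "x i + x i' \<le> T j" unfolding T_def
        using sum.subset_diff[of "{i, i'}" "I j" x] i i' finI nn by simp
      moreover have "0 < x i'" using xpos[of j] i'(1) by blast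
      ultimately have "x i < T j" by linarith
      then have "a j < T j powr p" unfolding a_def T_def
        using superadd(2)[OF finI xpos p] i by blast
      then show False using abeq[OF that] Tb[OF that] by simp
    qed
    then show ?thesis by blast
  qed
  have inj: "inj_on \<phi> {..<m}"
  proof (rule inj_onI)
    fix i i' assume "i \<in> {..<m}" "i' \<in> {..<m}" "\<phi> i = \<phi> i'"
    moreover have "\<phi> i < l" using ph1 \<open>i \<in> {..<m}\<close> by auto
    ultimately obtain i0 where i0: "I (\<phi> i) = {i0}" using single by blast
    have "i \<in> I (\<phi> i)" "i' \<in> I (\<phi> i)"
      using \<open>i \<in> {..<m}\<close> \<open>i' \<in> {..<m}\<close> \<open>\<phi> i = \<phi> i'\<close> unfolding I_def by auto
    then show "i = i'" using i0 by auto
  qed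
  have img: "\<phi> ` {..<m} = {..<l}"
  proof
    show "\<phi> ` {..<m} \<subseteq> {..<l}" using ph1 by auto
    show "{..<l} \<subseteq> \<phi> ` {..<m}"
    proof
      fix j assume "j \<in> {..<l}"
      then obtain i where "I j = {i}" using single by blast
      then have "i \<in> I j" by simp
      then show "j \<in> \<phi> ` {..<m}" unfolding I_def by auto
    qed
  qed
  have val: "xs ! i = ys ! \<phi> i" if "i < m" for i
  proof -
    have j: "\<phi> i < l" using ph1 that by auto
    obtain i0 where i0: "I (\<phi> i) = {i0}" using single[OF j] by blast
    have "i \<in> I (\<phi> i)" unfolding I_def using that by auto
    then have "i = i0" using i0 by auto
    then have "T (\<phi> i) = x i" unfolding T_def using i0 by simp
    then show ?thesis using Teq[OF j] unfolding x_def by simp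
  qed
  have "mset xs = image_mset (\<lambda>i. ys ! \<phi> i) (mset_set {..<m})"
    unfolding mset_idx[of xs] m_def[symmetric] using val
    by (intro image_mset_cong) auto
  also have "\<dots> = image_mset (\<lambda>j. ys ! j) (image_mset \<phi> (mset_set {..<m}))"
    by (simp add: image_mset.compositionality comp_def)
  also have "\<dots> = mset ys"
    unfolding image_mset_mset_set[OF inj] img mset_idx[of ys] l_def ..
  finally show ?thesis .
qed


lemma split_sum:
  fixes f :: "nat \<Rightarrow> real"
  shows "(\<Sum>x\<in>#A. f x) = of_nat (count A M) * f M + (\<Sum>x\<in>#{#x\<in>#A. x \<noteq> M#}. f x)"
proof -
  have "(\<Sum>x\<in>#A. f x) = (\<Sum>x\<in># {#x\<in>#A. x = M#} + {#x\<in>#A. x \<noteq> M#}. f x)"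
    by (metis multiset_partition)
  then show ?thesis by (simp add: filter_eq_replicate_mset)
qed

lemma exists_k:
  fixes M N :: nat
  assumes "0 < M"
  shows "\<exists>k. real N * (real M - 1) ^ k < real M ^ k"
proof (cases "M = 1")
  case True then show ?thesis by (intro exI[of _ 1]) simp
next
  case False
  then have M2: "2 \<le> M" using assms by simp
  have "1 < real M / (real M - 1)" using M2 by (simp add: field_simps)
  from real_arch_pow[OF this, of "real N"] obtain k where
    k: "real N < (real M / (real M - 1)) ^ k" by blast
  have pos: "0 < (real M - 1) ^ k" using M2 by simp
  have "real N < real M ^ k / (real M - 1) ^ k" using k by (simp add: power_divide)
  then show ?thesis using pos by (intro exI[of _ k]) (simp add: pos_less_divide_eq)
qed

lemma count_le:
  fixes A B :: "nat multiset"
  assumes "0 < M" "\<forall>x\<in>#A. x \<le> M" "\<forall>x\<in>#B. x \<le> M"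
    and eq: "\<forall>k::nat. (\<Sum>x\<in>#A. real x ^ k) = (\<Sum>x\<in>#B. real x ^ k)"
  shows "count B M \<le> count A M"
proof (rule ccontr)
  assume "\<not> count B M \<le> count A M"
  then have lt: "count A M + 1 \<le> count B M" by simp
  obtain k where k: "real (size A) * (real M - 1) ^ k < real M ^ k"
    using exists_k[OF assms(1)] by blast
  define A' where "A' = {#x\<in>#A. x \<noteq> M#}"
  define B' where "B' = {#x\<in>#B. x \<noteq> M#}"
  have "(\<Sum>x\<in>#A'. real x ^ k) \<le> (\<Sum>x\<in>#A'. (real M - 1) ^ k)"
  proof (rule sum_mset_mono)
    fix x assume "x \<in># A'"
    then have "x \<le> M" "x \<noteq> M" using assms(2) unfolding A'_def by auto
    then have "real x \<le> real M - 1" by linarith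
    then show "real x ^ k \<le> (real M - 1) ^ k" by (intro power_mono) auto
  qed
  also have "\<dots> = real (size A') * (real M - 1) ^ k" by simp
  also have "\<dots> \<le> real (size A) * (real M - 1) ^ k"
    unfolding A'_def using assms(1) by (intro mult_right_mono) auto
  finally have a1: "(\<Sum>x\<in>#A'. real x ^ k) < real M ^ k" using k by linarith
  have b1: "0 \<le> (\<Sum>x\<in>#B'. real x ^ k)" by (induction B') auto
  have "(\<Sum>x\<in>#A. real x ^ k) = real (count A M) * real M ^ k + (\<Sum>x\<in>#A'. real x ^ k)"
    unfolding A'_def by (rule split_sum)
  moreover have "(\<Sum>x\<in>#B. real x ^ k) = real (count B M) * real M ^ k + (\<Sum>x\<in>#B'. real x ^ k)"
    unfolding B'_def by (rule split_sum)
  moreover have "real (count A M) * real M ^ k + real M ^ k \<le> real (count B M) * real M ^ k"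
  proof -
    have "real (count A M) + 1 \<le> real (count B M)" using lt by linarith
    then have "(real (count A M) + 1) * real M ^ k \<le> real (count B M) * real M ^ k"
      by (intro mult_right_mono) auto
    then show ?thesis by (simp add: algebra_simps)
  qed
  ultimately show False using eq[rule_format, of k] a1 b1 by linarith
qed

lemma mset_eq_powsums:
  fixes A B :: "nat multiset"
  assumes "0 \<notin># A" "0 \<notin># B"
    and "\<forall>k::nat. (\<Sum>x\<in>#A. real x ^ k) = (\<Sum>x\<in>#B. real x ^ k)"
  shows "A = B"
  using assms
proof (induction "size A + size B" arbitrary: A B rule: less_induct)
  case less
  have "(\<Sum>x\<in>#A. real x ^ 0) = (\<Sum>x\<in>#B. real x ^ 0)" using less.prems(3) by blast
  then have sz: "size A = size B" by simp
  show ?case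
  proof (cases "A = {#}")
    case True then show ?thesis using sz by simp
  next
    case False
    define M where "M = Max (set_mset A \<union> set_mset B)"
    have fin: "finite (set_mset A \<union> set_mset B)" by simp
    have Min: "M \<in> set_mset A \<union> set_mset B" unfolding M_def using False
      by (intro Max_in fin) auto
    have Mge: "x \<le> M" if "x \<in> set_mset A \<union> set_mset B" for x
      unfolding M_def using fin that by (rule Max_ge)
    have M0: "0 < M" using Min less.prems(1,2) by (metis Un_iff gr0I)
    have c1: "count B M \<le> count A M"
      using count_le[OF M0 _ _ less.prems(3)] Mge by auto
    have c2: "count A M \<le> count B M"
      using count_le[OF M0 _ _ less.prems(3)[rule_format, symmetric, THEN allI]] Mge by auto
    have c: "count A M = count B M" using c1 c2 by simp
    define A' where "A' = {#x\<in>#A. x \<noteq> M#}"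
    define B' where "B' = {#x\<in>#B. x \<noteq> M#}"
    have eq': "\<forall>k::nat. (\<Sum>x\<in>#A'. real x ^ k) = (\<Sum>x\<in>#B'. real x ^ k)"
    proof
      fix k :: nat
      have "real (count A M) * real M ^ k + (\<Sum>x\<in>#A'. real x ^ k)
          = real (count B M) * real M ^ k + (\<Sum>x\<in>#B'. real x ^ k)"
        using less.prems(3) split_sum[of "\<lambda>x. real x ^ k" A M] split_sum[of "\<lambda>x. real x ^ k" B M]
        unfolding A'_def B'_def by metis
      then show "(\<Sum>x\<in>#A'. real x ^ k) = (\<Sum>x\<in>#B'. real x ^ k)" using c by simp
    qed
    have "M \<in># A \<or> M \<in># B" using Min by auto
    then have cpos: "0 < count A M" using c by (metis count_greater_zero_iff)
    have sA: "size A' < size A"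
    proof -
      have "size A = size {#x\<in>#A. x = M#} + size A'"
        unfolding A'_def by (metis multiset_partition size_union)
      then show ?thesis using cpos by (simp add: filter_eq_replicate_mset)
    qed
    have sB: "size B' \<le> size B" unfolding B'_def by simp
    have "A' = B'"
      using less.hyps[of A' B'] sA sB eq' less.prems(1,2) unfolding A'_def B'_def by auto
    have "A = {#x\<in>#A. x = M#} + A'" unfolding A'_def by (metis multiset_partition)
    also have "\<dots> = {#x\<in>#B. x = M#} + B'" using \<open>A' = B'\<close> c by (simp add: filter_eq_replicate_mset)
    also have "\<dots> = B" unfolding B'_def by (metis multiset_partition)
    finally show ?thesis .
  qed
qed


theorem corollary2p2:
  fixes lam mu :: "nat list" and p :: real
  assumes "is_partition lam" and "is_partition mu" and "lam \<noteq> mu"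
    and "1 < p" and "pnorm p lam = pnorm p mu"
  shows "\<forall>n::nat. 0 < n \<longrightarrow> \<not> embeds (ppow lam n) (ppow mu n)"
proof (intro allI impI notI)
  fix n :: nat
  assume n: "0 < n" and emb: "embeds (ppow lam n) (ppow mu n)"
  have pl: "\<forall>x\<in>set lam. 0 < x" and pm: "\<forall>x\<in>set mu. 0 < x"
    using assms(1,2) unfolding is_partition_def by auto
  define S where "S xs = sum_list (map (\<lambda>x. real x powr p) xs)" for xs
  have S0: "0 \<le> S xs" for xs unfolding S_def by (intro sum_list_nonneg) auto
  have Sn: "S xs = pnorm p xs powr p" for xs
    unfolding pnorm_def S_def[symmetric] using S0[of xs] assms(4) by (simp add: powr_powr)
  have Slm: "S lam = S mu" using Sn assms(5) by metis
  have fm: "real (x * y) powr p = real x powr p * real y powr p" for x y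
    using powr_mult[of "real x" "real y" p] by simp
  have Spow: "S (ppow xs n) = S xs ^ n" for xs
    unfolding S_def by (rule ppow_sum) (simp_all add: powr_mult)
  have "mset (ppow lam n) = mset (ppow mu n)"
    using embed_eq[OF emb ppow_pos[OF pl] ppow_pos[OF pm] assms(4)]
    using Spow[of lam] Spow[of mu] Slm unfolding S_def by simp
  then have ms: "mset lam = mset mu"
  proof (intro mset_eq_powsums allI)
    show "0 \<notin># mset lam" using pl by auto
    show "0 \<notin># mset mu" using pm by auto
    fix k :: nat
    assume eqm: "mset (ppow lam n) = mset (ppow mu n)"
    define P where "P xs = sum_list (map (\<lambda>x. real x ^ k) xs)" for xs
    have Ppow: "P (ppow xs n) = P xs ^ n" for xs
      unfolding P_def by (rule ppow_sum) (simp_all add: power_mult_distrib)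
    have "P (ppow lam n) = P (ppow mu n)" unfolding P_def sum_list_map_mset eqm ..
    then have "P lam ^ n = P mu ^ n" using Ppow by simp
    moreover have "0 \<le> P xs" for xs unfolding P_def by (intro sum_list_nonneg) auto
    ultimately have "P lam = P mu" using n by (metis power_eq_imp_eq_base)
    then show "(\<Sum>x\<in>#mset lam. real x ^ k) = (\<Sum>x\<in>#mset mu. real x ^ k)"
      unfolding P_def sum_list_map_mset .
  qed
  have sl: "sorted (rev lam)" and sm: "sorted (rev mu)"
    using assms(1,2) unfolding is_partition_def by (simp_all add: sorted_wrt_rev)
  have "sort mu = rev lam" using ms sl by (intro properties_for_sort) simp_all
  moreover have "sort mu = rev mu" using sm by (intro properties_for_sort) simp_all
  ultimately show False using assms(3) by simp
qed

end
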